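(* Let $M=\{m_1,m_2,m_3\}$ and $N=\{n_1,n_2,n_3\}$ be 3-element subsets of $\mathbb{N}$ (so the $m_i$ are pairwise distinct and the $n_i$ are pairwise distinct). For $X\subseteq\mathbb{N}$ let $S_X$ be the subsemigroup of $\mathbb{N}\times\mathbb{N}$ generated by $\{(1,x): x\in X\}$. Then there exists an isomorphism $\varphi:S_M\to S_N$ with $\varphi(1,m_i)=(1,n_i)$ for $i=1,2,3$ if and only if $$n_2(m_3-m_1)=n_1(m_3-m_2)+n_3(m_2-m_1).$$
   Context: $\mathbb{N}=\{1,2,3,\dots\}$ under addition, $\mathbb{N}\times\mathbb{N}$ with componentwise addition. *)

theory Defs
  imports Main
begin

text \<open>Componentwise addition on N x N (N = positive integers, represented in nat).\<close>
definition padd :: "nat \<times> nat \<Rightarrow> nat \<times> nat \<Rightarrow> nat \<times> nat" where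
  "padd a b = (fst a + fst b, snd a + snd b)"

inductive_set gen_subsemigroup :: "nat set \<Rightarrow> (nat \<times> nat) set" for X :: "nat set" where
  gen: "x \<in> X \<Longrightarrow> (1, x) \<in> gen_subsemigroup X"
| add: "a \<in> gen_subsemigroup X \<Longrightarrow> b \<in> gen_subsemigroup X \<Longrightarrow> padd a b \<in> gen_subsemigroup X"

definition semigroup_iso :: "(nat \<times> nat) set \<Rightarrow> (nat \<times> nat) set \<Rightarrow> (nat \<times> nat \<Rightarrow> nat \<times> nat) \<Rightarrow> bool" where
  "semigroup_iso S T \<phi> \<longleftrightarrow> bij_betw \<phi> S T \<and> (\<forall>a\<in>S. \<forall>b\<in>S. \<phi> (padd a b) = padd (\<phi> a) (\<phi> b))"

end

theory Submission
  imports Defs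
begin

definition pt :: "nat \<Rightarrow> nat \<Rightarrow> nat \<Rightarrow> nat \<Rightarrow> nat \<Rightarrow> nat \<Rightarrow> nat \<times> nat" where
  "pt c1 c2 c3 m1 m2 m3 = (c1 + c2 + c3, c1*m1 + c2*m2 + c3*m3)"

lemma pt_step:
  assumes "c1 + c2 + c3 = Suc (Suc n)"
  shows "(\<exists>d1 d2 d3. d1+d2+d3 = Suc n \<and> (\<forall>m1 m2 m3. pt c1 c2 c3 m1 m2 m3 = padd (1,m1) (pt d1 d2 d3 m1 m2 m3))) \<or>
         (\<exists>d1 d2 d3. d1+d2+d3 = Suc n \<and> (\<forall>m1 m2 m3. pt c1 c2 c3 m1 m2 m3 = padd (1,m2) (pt d1 d2 d3 m1 m2 m3))) \<or>
         (\<exists>d1 d2 d3. d1+d2+d3 = Suc n \<and> (\<forall>m1 m2 m3. pt c1 c2 c3 m1 m2 m3 = padd (1,m3) (pt d1 d2 d3 m1 m2 m3)))"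
proof -
  consider k where "c1 = Suc k" | k where "c2 = Suc k" | k where "c3 = Suc k"
    using assms by (metis add_is_0 not0_implies_Suc nat.distinct(1))
  then show ?thesis
  proof cases
    case 1
    then show ?thesis using assms
      by (intro disjI1 exI[of _ k] exI[of _ c2] exI[of _ c3]) (simp add: pt_def padd_def)
  next
    case 2
    then show ?thesis using assms
      by (intro disjI2 disjI1 exI[of _ c1] exI[of _ k] exI[of _ c3]) (simp add: pt_def padd_def)
  next
    case 3
    then show ?thesis using assms
      by (intro disjI2 disjI2 exI[of _ c1] exI[of _ c2] exI[of _ k]) (simp add: pt_def padd_def)
  qed
qed

lemma pt_one:
  assumes "c1 + c2 + c3 = Suc 0"
  shows "pt c1 c2 c3 m1 m2 m3 \<in> {(1,m1),(1,m2),(1,m3)}"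
proof -
  consider "c1 = 1 \<and> c2 = 0 \<and> c3 = 0" | "c1 = 0 \<and> c2 = 1 \<and> c3 = 0" | "c1 = 0 \<and> c2 = 0 \<and> c3 = 1"
    using assms by linarith
  then show ?thesis by cases (auto simp: pt_def)
qed

lemma pt_mem:
  assumes "c1 + c2 + c3 > 0"
  shows "pt c1 c2 c3 m1 m2 m3 \<in> gen_subsemigroup {m1, m2, m3}"
proof -
  obtain n where n: "c1 + c2 + c3 = Suc n" using assms gr0_implies_Suc by blast
  have "\<forall>c1 c2 c3. c1 + c2 + c3 = Suc n \<longrightarrow> pt c1 c2 c3 m1 m2 m3 \<in> gen_subsemigroup {m1, m2, m3}"
  proof (induction n)
    case 0
    show ?case
    proof (intro allI impI)
      fix c1 c2 c3 :: nat assume h: "c1 + c2 + c3 = Suc 0"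
      have G: "(1,m1) \<in> gen_subsemigroup {m1,m2,m3}" "(1,m2) \<in> gen_subsemigroup {m1,m2,m3}"
        "(1,m3) \<in> gen_subsemigroup {m1,m2,m3}" by (rule gen_subsemigroup.gen, simp)+
      show "pt c1 c2 c3 m1 m2 m3 \<in> gen_subsemigroup {m1, m2, m3}"
        using pt_one[OF h, of m1 m2 m3] G by auto
    qed
  next
    case (Suc n)
    show ?case
    proof (intro allI impI)
      fix c1 c2 c3 assume h: "c1 + c2 + c3 = Suc (Suc n)"
      have G: "(1,m1) \<in> gen_subsemigroup {m1,m2,m3}" "(1,m2) \<in> gen_subsemigroup {m1,m2,m3}"
        "(1,m3) \<in> gen_subsemigroup {m1,m2,m3}" by (rule gen_subsemigroup.gen, simp)+
      from pt_step[OF h] show "pt c1 c2 c3 m1 m2 m3 \<in> gen_subsemigroup {m1, m2, m3}"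
        using Suc.IH G by (auto intro!: gen_subsemigroup.add)
    qed
  qed
  then show ?thesis using n by blast
qed

lemma pt_phi:
  assumes add: "\<forall>a\<in>gen_subsemigroup {m1,m2,m3}. \<forall>b\<in>gen_subsemigroup {m1,m2,m3}. \<phi> (padd a b) = padd (\<phi> a) (\<phi> b)"
    and g: "\<phi> (1, m1) = (1, n1)" "\<phi> (1, m2) = (1, n2)" "\<phi> (1, m3) = (1, n3)"
    and pos: "c1 + c2 + c3 > 0"
  shows "\<phi> (pt c1 c2 c3 m1 m2 m3) = pt c1 c2 c3 n1 n2 n3"
proof -
  obtain n where n: "c1 + c2 + c3 = Suc n" using pos gr0_implies_Suc by blast
  have "\<forall>c1 c2 c3. c1 + c2 + c3 = Suc n \<longrightarrow> \<phi> (pt c1 c2 c3 m1 m2 m3) = pt c1 c2 c3 n1 n2 n3"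
  proof (induction n)
    case 0
    show ?case
    proof (intro allI impI)
      fix c1 c2 c3 :: nat assume h: "c1 + c2 + c3 = Suc 0"
      consider "c1 = 1 \<and> c2 = 0 \<and> c3 = 0" | "c1 = 0 \<and> c2 = 1 \<and> c3 = 0" | "c1 = 0 \<and> c2 = 0 \<and> c3 = 1"
        using h by linarith
      then show "\<phi> (pt c1 c2 c3 m1 m2 m3) = pt c1 c2 c3 n1 n2 n3" using g by cases (auto simp: pt_def)
    qed
  next
    case (Suc n)
    show ?case
    proof (intro allI impI)
      fix c1 c2 c3 assume h: "c1 + c2 + c3 = Suc (Suc n)"
      have G: "(1,m1) \<in> gen_subsemigroup {m1,m2,m3}" "(1,m2) \<in> gen_subsemigroup {m1,m2,m3}"
        "(1,m3) \<in> gen_subsemigroup {m1,m2,m3}" by (rule gen_subsemigroup.gen, simp)+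
      from pt_step[OF h] show "\<phi> (pt c1 c2 c3 m1 m2 m3) = pt c1 c2 c3 n1 n2 n3"
      proof (elim disjE exE conjE)
        fix d1 d2 d3 assume d: "d1 + d2 + d3 = Suc n" and e: "\<forall>m1 m2 m3. pt c1 c2 c3 m1 m2 m3 = padd (1, m1) (pt d1 d2 d3 m1 m2 m3)"
        have M: "pt d1 d2 d3 m1 m2 m3 \<in> gen_subsemigroup {m1,m2,m3}" by (rule pt_mem) (simp add: d)
        show ?thesis using e add G M Suc.IH d g by simp
      next
        fix d1 d2 d3 assume d: "d1 + d2 + d3 = Suc n" and e: "\<forall>m1 m2 m3. pt c1 c2 c3 m1 m2 m3 = padd (1, m2) (pt d1 d2 d3 m1 m2 m3)"
        have M: "pt d1 d2 d3 m1 m2 m3 \<in> gen_subsemigroup {m1,m2,m3}" by (rule pt_mem) (simp add: d)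
        show ?thesis using e add G M Suc.IH d g by simp
      next
        fix d1 d2 d3 assume d: "d1 + d2 + d3 = Suc n" and e: "\<forall>m1 m2 m3. pt c1 c2 c3 m1 m2 m3 = padd (1, m3) (pt d1 d2 d3 m1 m2 m3)"
        have M: "pt d1 d2 d3 m1 m2 m3 \<in> gen_subsemigroup {m1,m2,m3}" by (rule pt_mem) (simp add: d)
        show ?thesis using e add G M Suc.IH d g by simp
      qed
    qed
  qed
  then show ?thesis using n by blast
qed

lemma padd_pt: "padd (pt c1 c2 c3 m1 m2 m3) (pt d1 d2 d3 m1 m2 m3) = pt (c1+d1) (c2+d2) (c3+d3) m1 m2 m3"
  by (simp add: pt_def padd_def algebra_simps)

lemma mem_pt:
  assumes "p \<in> gen_subsemigroup {m1, m2, m3}"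
  shows "\<exists>c1 c2 c3. c1 + c2 + c3 > 0 \<and> p = pt c1 c2 c3 m1 m2 m3"
  using assms
proof induction
  case (gen x)
  then have "x = m1 \<or> x = m2 \<or> x = m3" by simp
  then show ?case
  proof (elim disjE)
    assume "x = m1" then show ?thesis by (intro exI[of _ 1] exI[of _ 0] exI[of _ 0]) (simp add: pt_def)
  next
    assume "x = m2" then show ?thesis by (intro exI[of _ 0] exI[of _ 1] exI[of _ 0]) (simp add: pt_def)
  next
    assume "x = m3" then show ?thesis by (intro exI[of _ 0] exI[of _ 0] exI[of _ 1]) (simp add: pt_def)
  qed
next
  case (add a b)
  from add.IH(1) obtain c1 c2 c3 where c: "c1 + c2 + c3 > 0" "a = pt c1 c2 c3 m1 m2 m3" by (elim exE conjE)
  from add.IH(2) obtain d1 d2 d3 where d: "d1 + d2 + d3 > 0" "b = pt d1 d2 d3 m1 m2 m3" by (elim exE conjE)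
  have e: "padd a b = pt (c1+d1) (c2+d2) (c3+d3) m1 m2 m3"
    unfolding c(2) d(2) by (rule padd_pt)
  have p: "(c1+d1) + (c2+d2) + (c3+d3) > 0" using c(1) by linarith
  show ?case by (rule exI[of _ "c1+d1"], rule exI[of _ "c2+d2"], rule exI[of _ "c3+d3"]) (rule conjI[OF p e])
qed


lemma lin3: "int (x1 * a + x2 * b + x3 * c) - int (y1 * a + y2 * b + y3 * c)
   = (int x1 - int y1) * int a + (int x2 - int y2) * int b + (int x3 - int y3) * int c"
  by (simp add: algebra_simps)

lemma int_diff0: "int x - int y = 0 \<Longrightarrow> x = y" by simp

lemma rel:
  fixes m1 m2 m3 n1 n2 n3 :: nat
  assumes "m1 \<noteq> m2"
    and H: "\<And>c1 c2 c3 d1 d2 d3. c1+c2+c3 > 0 \<Longrightarrow> d1+d2+d3 > 0 \<Longrightarrow>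
        pt c1 c2 c3 m1 m2 m3 = pt d1 d2 d3 m1 m2 m3 \<Longrightarrow> pt c1 c2 c3 n1 n2 n3 = pt d1 d2 d3 n1 n2 n3"
  shows "int n2 * (int m3 - int m1) = int n1 * (int m3 - int m2) + int n3 * (int m2 - int m1)"
proof -
  define v1 where "v1 = int m3 - int m2"
  define v2 where "v2 = int m1 - int m3"
  define v3 where "v3 = int m2 - int m1"
  have nn: "\<And>v::int. int (nat v) - int (nat (-v)) = v" by simp
  have s0: "v1 + v2 + v3 = 0" by (simp add: v1_def v2_def v3_def)
  have sm: "v1 * int m1 + v2 * int m2 + v3 * int m3 = 0" by (simp add: v1_def v2_def v3_def algebra_simps)
  have v3: "v3 \<noteq> 0" using assms(1) by (simp add: v3_def)
  have "v1 > 0 \<or> v2 > 0 \<or> v3 > 0" using v3 s0 by linarith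
  then have p1: "nat v1 + nat v2 + nat v3 > 0" by auto
  have "v1 < 0 \<or> v2 < 0 \<or> v3 < 0" using v3 s0 by linarith
  then have p2: "nat (-v1) + nat (-v2) + nat (-v3) > 0" by auto
  have "int (nat v1 + nat v2 + nat v3) = int (nat (-v1) + nat (-v2) + nat (-v3))"
    using s0 nn[of v1] nn[of v2] nn[of v3] unfolding of_nat_add by linarith
  then have f: "nat v1 + nat v2 + nat v3 = nat (-v1) + nat (-v2) + nat (-v3)" by (simp only: of_nat_eq_iff)
  have sd: "\<And>a b c :: nat. int (nat v1 * a + nat v2 * b + nat v3 * c) - int (nat (-v1) * a + nat (-v2) * b + nat (-v3) * c)
     = v1 * int a + v2 * int b + v3 * int c"
  proof -
    fix a b c :: nat
    show "int (nat v1 * a + nat v2 * b + nat v3 * c) - int (nat (-v1) * a + nat (-v2) * b + nat (-v3) * c)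
     = v1 * int a + v2 * int b + v3 * int c" by (simp only: lin3 nn)
  qed
  have "int (nat v1 * m1 + nat v2 * m2 + nat v3 * m3) - int (nat (-v1) * m1 + nat (-v2) * m2 + nat (-v3) * m3) = 0"
    using sd[of m1 m2 m3] sm by (simp only:)
  then have "nat v1 * m1 + nat v2 * m2 + nat v3 * m3 = nat (-v1) * m1 + nat (-v2) * m2 + nat (-v3) * m3"
    by (rule int_diff0)
  then have "pt (nat v1) (nat v2) (nat v3) m1 m2 m3 = pt (nat (-v1)) (nat (-v2)) (nat (-v3)) m1 m2 m3"
    using f unfolding pt_def by (simp only:)
  from H[OF p1 p2 this] have "snd (pt (nat v1) (nat v2) (nat v3) n1 n2 n3) = snd (pt (nat (-v1)) (nat (-v2)) (nat (-v3)) n1 n2 n3)"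
    by (simp only:)
  then have "nat v1 * n1 + nat v2 * n2 + nat v3 * n3 = nat (-v1) * n1 + nat (-v2) * n2 + nat (-v3) * n3"
    unfolding pt_def snd_conv .
  then have "int (nat v1 * n1 + nat v2 * n2 + nat v3 * n3) - int (nat (-v1) * n1 + nat (-v2) * n2 + nat (-v3) * n3) = 0"
    by (simp only: diff_self)
  then have "v1 * int n1 + v2 * int n2 + v3 * int n3 = 0" using sd[of n1 n2 n3] by (simp only:)
  then show ?thesis by (simp add: v1_def v2_def v3_def algebra_simps)
qed

theorem lemma2p3:
  fixes m1 m2 m3 n1 n2 n3 :: nat
  assumes "m1 \<ge> 1" "m2 \<ge> 1" "m3 \<ge> 1" "n1 \<ge> 1" "n2 \<ge> 1" "n3 \<ge> 1"
    and "m1 \<noteq> m2" "m1 \<noteq> m3" "m2 \<noteq> m3"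
    and "n1 \<noteq> n2" "n1 \<noteq> n3" "n2 \<noteq> n3"
  shows "(\<exists>\<phi>. semigroup_iso (gen_subsemigroup {m1, m2, m3}) (gen_subsemigroup {n1, n2, n3}) \<phi>
              \<and> \<phi> (1, m1) = (1, n1) \<and> \<phi> (1, m2) = (1, n2) \<and> \<phi> (1, m3) = (1, n3))
         \<longleftrightarrow> int n2 * (int m3 - int m1) = int n1 * (int m3 - int m2) + int n3 * (int m2 - int m1)"
proof
  assume "\<exists>\<phi>. semigroup_iso (gen_subsemigroup {m1, m2, m3}) (gen_subsemigroup {n1, n2, n3}) \<phi>
              \<and> \<phi> (1, m1) = (1, n1) \<and> \<phi> (1, m2) = (1, n2) \<and> \<phi> (1, m3) = (1, n3)"
  then obtain \<phi> where iso: "semigroup_iso (gen_subsemigroup {m1, m2, m3}) (gen_subsemigroup {n1, n2, n3}) \<phi>"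
    and g: "\<phi> (1, m1) = (1, n1)" "\<phi> (1, m2) = (1, n2)" "\<phi> (1, m3) = (1, n3)" by blast
  have add: "\<forall>a\<in>gen_subsemigroup {m1,m2,m3}. \<forall>b\<in>gen_subsemigroup {m1,m2,m3}. \<phi> (padd a b) = padd (\<phi> a) (\<phi> b)"
    using iso by (simp add: semigroup_iso_def)
  show "int n2 * (int m3 - int m1) = int n1 * (int m3 - int m2) + int n3 * (int m2 - int m1)"
  proof (rule rel[OF assms(7)])
    fix c1 c2 c3 d1 d2 d3 :: nat
    assume "c1+c2+c3 > 0" "d1+d2+d3 > 0" "pt c1 c2 c3 m1 m2 m3 = pt d1 d2 d3 m1 m2 m3"
    then show "pt c1 c2 c3 n1 n2 n3 = pt d1 d2 d3 n1 n2 n3"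
      using pt_phi[OF add g, of c1 c2 c3] pt_phi[OF add g, of d1 d2 d3] by simp
  qed
next
  assume H: "int n2 * (int m3 - int m1) = int n1 * (int m3 - int m2) + int n3 * (int m2 - int m1)"
  define d where "d = int m2 - int m1"
  define B where "B = int n2 - int n1"
  define A where "A = int n1 * int m2 - int n2 * int m1"
  define \<phi> where "\<phi> p = (fst p, nat ((A * int (fst p) + B * int (snd p)) div d))" for p
  have d0: "d \<noteq> 0" using assms(7) by (simp add: d_def)
  have B0: "B \<noteq> 0" using assms(10) by (simp add: B_def)
  have l1: "d * int n1 = A + B * int m1" by (simp add: d_def A_def B_def algebra_simps)
  have l2: "d * int n2 = A + B * int m2" by (simp add: d_def A_def B_def algebra_simps)
  have l3: "d * int n3 = A + B * int m3" using H by (simp add: d_def A_def B_def algebra_simps)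
  have key: "A * int (c1+c2+c3) + B * int (c1*m1+c2*m2+c3*m3) = d * int (c1*n1+c2*n2+c3*n3)" for c1 c2 c3
  proof -
    have "d * int (c1*n1+c2*n2+c3*n3) = int c1 * (d * int n1) + int c2 * (d * int n2) + int c3 * (d * int n3)"
      by (simp add: algebra_simps)
    also have "\<dots> = int c1 * (A + B * int m1) + int c2 * (A + B * int m2) + int c3 * (A + B * int m3)" by (simp only: l1 l2 l3)
    finally show ?thesis by (simp add: algebra_simps)
  qed
  have php: "\<phi> (pt c1 c2 c3 m1 m2 m3) = pt c1 c2 c3 n1 n2 n3" for c1 c2 c3
  proof -
    have "(A * int (c1+c2+c3) + B * int (c1*m1+c2*m2+c3*m3)) div d = int (c1*n1+c2*n2+c3*n3)"
      by (simp only: key nonzero_mult_div_cancel_left[OF d0])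
    then show ?thesis unfolding \<phi>_def pt_def fst_conv snd_conv by (simp only: nat_int)
  qed
  have injp: "pt c1 c2 c3 m1 m2 m3 = pt e1 e2 e3 m1 m2 m3" if "pt c1 c2 c3 n1 n2 n3 = pt e1 e2 e3 n1 n2 n3"
    for c1 c2 c3 e1 e2 e3
  proof -
    have fs: "c1+c2+c3 = e1+e2+e3 \<and> c1*n1+c2*n2+c3*n3 = e1*n1+e2*n2+e3*n3"
      using that unfolding pt_def prod.inject .
    then have f: "c1+c2+c3 = e1+e2+e3" and s: "c1*n1+c2*n2+c3*n3 = e1*n1+e2*n2+e3*n3" by blast+
    have "A * int (c1+c2+c3) + B * int (c1*m1+c2*m2+c3*m3) = A * int (e1+e2+e3) + B * int (e1*m1+e2*m2+e3*m3)"
      by (simp only: key s)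
    then have "B * int (c1*m1+c2*m2+c3*m3) = B * int (e1*m1+e2*m2+e3*m3)" by (simp only: f add_left_cancel)
    then have "int (c1*m1+c2*m2+c3*m3) = int (e1*m1+e2*m2+e3*m3)" by (simp only: mult_cancel_left B0 simp_thms)
    then have "c1*m1+c2*m2+c3*m3 = e1*m1+e2*m2+e3*m3" by (simp only: of_nat_eq_iff)
    then show ?thesis using f unfolding pt_def by (simp only:)
  qed
  let ?SM = "gen_subsemigroup {m1, m2, m3}" and ?SN = "gen_subsemigroup {n1, n2, n3}"
  have inj: "inj_on \<phi> ?SM"
  proof (rule inj_onI)
    fix x y assume "x \<in> ?SM" "y \<in> ?SM" "\<phi> x = \<phi> y"
    note h = this
    obtain c1 c2 c3 where x: "x = pt c1 c2 c3 m1 m2 m3" using mem_pt[OF h(1)] by (elim exE conjE)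
    obtain e1 e2 e3 where y: "y = pt e1 e2 e3 m1 m2 m3" using mem_pt[OF h(2)] by (elim exE conjE)
    have "pt c1 c2 c3 n1 n2 n3 = pt e1 e2 e3 n1 n2 n3" using h(3) unfolding x y php .
    then show "x = y" unfolding x y by (rule injp)
  qed
  have img: "\<phi> ` ?SM = ?SN"
  proof
    show "\<phi> ` ?SM \<subseteq> ?SN"
    proof
      fix y assume "y \<in> \<phi> ` ?SM"
      then obtain x where xm: "x \<in> ?SM" and "y = \<phi> x" by (elim imageE)
      from mem_pt[OF xm] obtain c1 c2 c3 where "c1+c2+c3 > 0" "x = pt c1 c2 c3 m1 m2 m3" by (elim exE conjE)
      then show "y \<in> ?SN" using \<open>y = \<phi> x\<close> php pt_mem by simp
    qed
    show "?SN \<subseteq> \<phi> ` ?SM"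
    proof
      fix y assume "y \<in> ?SN"
      from mem_pt[OF this] obtain c1 c2 c3 where "c1+c2+c3 > 0" "y = pt c1 c2 c3 n1 n2 n3" by (elim exE conjE)
      then show "y \<in> \<phi> ` ?SM" using php[of c1 c2 c3] pt_mem[of c1 c2 c3 m1 m2 m3] by (metis image_eqI)
    qed
  qed
  have hom: "\<forall>a\<in>?SM. \<forall>b\<in>?SM. \<phi> (padd a b) = padd (\<phi> a) (\<phi> b)"
  proof (intro ballI)
    fix a b assume "a \<in> ?SM" "b \<in> ?SM"
    note ab = this
    from mem_pt[OF ab(1)] obtain c1 c2 c3 where "a = pt c1 c2 c3 m1 m2 m3" by (elim exE conjE)
    moreover from mem_pt[OF ab(2)] obtain e1 e2 e3 where "b = pt e1 e2 e3 m1 m2 m3" by (elim exE conjE)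
    ultimately show "\<phi> (padd a b) = padd (\<phi> a) (\<phi> b)" by (simp add: padd_pt php)
  qed
  have gs: "\<phi> (1, m1) = (1, n1)" "\<phi> (1, m2) = (1, n2)" "\<phi> (1, m3) = (1, n3)"
    using php[of 1 0 0] php[of 0 1 0] php[of 0 0 1] by (simp_all add: pt_def)
  show "\<exists>\<phi>. semigroup_iso ?SM ?SN \<phi> \<and> \<phi> (1, m1) = (1, n1) \<and> \<phi> (1, m2) = (1, n2) \<and> \<phi> (1, m3) = (1, n3)"
    using inj img hom gs by (auto simp: semigroup_iso_def bij_betw_def)
qed

end
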